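(* Let $\{\mu_t\}$ be a free convolution semigroup, $\nu$ a unital linear functional on $\mathbb C[x]$, and $\nu_t=\nu\boxplus\mu_t$. Define the family of operators $\{\mathcal D_{t,\nu}\}_{t\in\mathbb R_+}$ on $C^1(\mathbb R_+)[x]$ by \[ \mathcal D_{t,\nu}f=\sum_{n=1}^\infty\frac{1}{(n-1)!}r_n\,\bigl\langle \mathrm{Id}\otimes\nu_t^{\otimes(n-1)},\,(\partial_x\otimes\mathrm{Id}^{\otimes(n-1)})\partial^{n-1}f\bigr\rangle+\partial_tf . \] Then: (1) for every $f\in C^1(\mathbb R_+)[x]$, $\partial_t\langle\nu_t,f\rangle=\langle\nu_t,\mathcal D_{t,\nu}f\rangle$; (2) if $f\in C^1(\mathbb R_+)[x]$ is a martingale polynomial for $\{\mu_t\}$ and $\nu=\delta_0$, then $\mathcal D_{t,\delta_0}f=0$.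
   Context: $C^1(\mathbb R_+)[x]$ is the space of polynomials in $x$ whose coefficients are complex differentiable functions of $t\in\mathbb R_+$; $\partial_t,\partial_x$ and functionals act coefficientwise. $\mu$ is a freely infinitely divisible probability measure with all moments finite, $r_n$ its free cumulants, and $\{\mu_t\}$ the free convolution semigroup with $\mu_1=\mu$, $R_{\mu_t}=tR_\mu$, where for a unital functional $\nu$ on $\mathbb C[x]$, $G_\nu(z)=\sum\langle\nu,x^n\rangle z^{-(n+1)}$, $K_\nu$ is its compositional inverse, $R_\nu=K_\nu-\frac1z=\sum_{n\ge1}r_n(\nu)z^{n-1}$, and $\nu\boxplus\mu_t$ is the unital functional with $R_{\nu\boxplus\mu_t}=R_\nu+tR_\mu$. The derivation $\partial:\mathbb C[x]\to\mathbb C[x]\otimes\mathbb C[x]\cong\mathbb C[x,y]$ is $\partial f(x,y)=\frac{f(x)-f(y)}{x-y}$; $\partial^0=\mathrm{Id}$ and $\partial^k=k(1\otimes\cdots\otimes1\otimes\partial)\partial^{k-1}:\mathbb C[x]\to\mathbb C[x]^{\otimes(k+1)}$, so $\partial^kx^n=k!\sum_{i(0)+\dots+i(k)=n-k}x^{i(0)}\otimes\cdots\otimes x^{i(k)}$. $\partial_x\otimes\mathrm{Id}^{\otimes(n-1)}$ differentiates the first tensor factor, and $\langle\mathrm{Id}\otimes\nu_t^{\otimes(n-1)},\cdot\rangle$ applies $\nu_t$ to the last $n-1$ tensor factors, giving a polynomial in $x$ (the sum is finite on polynomials). Martingale polynomial: $p(x,t)$ polynomial in $x$ with $\mathcal K_{s,t}(p(\cdot,t))=p(\cdot,s)$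 for $s<t$, where $\mathcal K_{s,t}$ is the linear operator on $\mathbb C[x]$ determined coefficientwise by $\mathcal K_{s,t}(\mathrm{Res}_z)=\mathrm{Res}_{F_{s,t}(z)}$, $\mathrm{Res}_z(x)=\frac1{z-x}=\sum x^nz^{-(n+1)}$, $F_{s,t}=K_{\mu_s}\circ G_{\mu_t}$. *)

theory Defs
  imports "HOL-Probability.Probability" "HOL-Computational_Algebra.Computational_Algebra"
begin

text \<open>A linear functional on C[x] is represented by its moment sequence
  (value on x^n); it is unital iff the 0-th moment is 1.\<close>

definition fun_app :: "(nat \<Rightarrow> complex) \<Rightarrow> complex poly \<Rightarrow> complex" where
  "fun_app m p = (\<Sum>k\<le>degree p. coeff p k * m k)"

text \<open>Cauchy transform G(z) = sum m_n z^-(n+1), written as a formal power series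
  in the variable w = 1/z, i.e. g(w) = sum m_n w^(n+1).\<close>
definition G_fps :: "(nat \<Rightarrow> complex) \<Rightarrow> complex fps" where
  "G_fps m = fps_X * Abs_fps m"

text \<open>K is the compositional inverse of G: G(K(z)) = z means g(1/K(z)) = z, i.e.
  1/K(z) = u(z) with u = fps_inv g = z v(z).  Hence R(z) = K(z) - 1/z = (1/v(z) - 1)/z
  and the free cumulant r_n (coefficient of z^(n-1) in R) is the coefficient of z^n
  in 1/v - 1.\<close>
definition free_cumulant :: "(nat \<Rightarrow> complex) \<Rightarrow> nat \<Rightarrow> complex" where
  "free_cumulant m n =
     (if n = 0 then 0 else (inverse (fps_shift 1 (fps_inv (G_fps m))) - 1) $ n)"

definition boxplus_t :: "(nat \<Rightarrow> complex) \<Rightarrow> (nat \<Rightarrow> complex) \<Rightarrow> real \<Rightarrow> (nat \<Rightarrow> complex)" where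
  "boxplus_t nu mu t = (THE m. m 0 = 1 \<and>
      (\<forall>n\<ge>1. free_cumulant m n = free_cumulant nu n + complex_of_real t * free_cumulant mu n))"

definition delta0 :: "nat \<Rightarrow> complex" where
  "delta0 n = (if n = 0 then 1 else 0)"

definition moments :: "real measure \<Rightarrow> nat \<Rightarrow> complex" where
  "moments M n = complex_of_real (integral\<^sup>L M (\<lambda>x. x ^ n))"

text \<open>Elements of C[x]^{tensor (k+1)} are represented by their coefficient functions on
  exponent lists [i0,...,ik] (coefficient of x^i0 tensor ... tensor x^ik).\<close>

text \<open>(1 tensor ... tensor 1 tensor partial) applied to a tensor.\<close>
definition dlast :: "(nat list \<Rightarrow> complex) \<Rightarrow> nat list \<Rightarrow> complex" where
  "dlast T e = (if 2 \<le> length e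
      then T (take (length e - 2) e @ [e ! (length e - 2) + e ! (length e - 1) + 1])
      else 0)"

fun partial_pow :: "nat \<Rightarrow> complex poly \<Rightarrow> nat list \<Rightarrow> complex" where
  "partial_pow 0 p = (\<lambda>e. if length e = 1 then coeff p (hd e) else 0)"
| "partial_pow (Suc k) p = (\<lambda>e. of_nat (Suc k) * dlast (partial_pow k p) e)"

definition dx_first :: "(nat list \<Rightarrow> complex) \<Rightarrow> nat list \<Rightarrow> complex" where
  "dx_first T e = (case e of [] \<Rightarrow> 0 | i # rest \<Rightarrow> of_nat (Suc i) * T (Suc i # rest))"

text \<open>< Id tensor nu^(tensor n), T > : apply nu to the last n tensor factors.\<close>
definition Id_nu_app :: "(nat \<Rightarrow> complex) \<Rightarrow> nat \<Rightarrow> (nat list \<Rightarrow> complex) \<Rightarrow> complex poly" where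
  "Id_nu_app m n T = Abs_poly (\<lambda>j.
      \<Sum>rest \<in> {rest. length rest = n \<and> T (j # rest) \<noteq> 0}. T (j # rest) * prod_list (map m rest))"

definition C1_poly :: "(real \<Rightarrow> complex poly) \<Rightarrow> bool" where
  "C1_poly f \<longleftrightarrow> (\<exists>N. \<forall>t\<ge>0. degree (f t) \<le> N) \<and>
     (\<forall>k. \<exists>f'. (\<forall>t\<ge>0. ((\<lambda>s. coeff (f s) k) has_vector_derivative f' t) (at t within {0..}))
              \<and> continuous_on {0..} f')"

definition poly_dt :: "(real \<Rightarrow> complex poly) \<Rightarrow> real \<Rightarrow> complex poly" where
  "poly_dt f t = Abs_poly (\<lambda>k. vector_derivative (\<lambda>s. coeff (f s) k) (at t within {0..}))"

text \<open>The series over n is finite: partial^(n-1) f(.,t) = 0 once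
  n - 1 > deg f(.,t), so we sum over n = 1 .. deg f(.,t) + 1.\<close>
definition D_op :: "(nat \<Rightarrow> complex) \<Rightarrow> (nat \<Rightarrow> complex) \<Rightarrow> (real \<Rightarrow> complex poly) \<Rightarrow> real \<Rightarrow> complex poly" where
  "D_op mu nu f t =
     (\<Sum>n\<in>{1..Suc (degree (f t))}.
        smult (free_cumulant mu n / fact (n - 1))
          (Id_nu_app (boxplus_t nu mu t) (n - 1) (dx_first (partial_pow (n - 1) (f t)))))
     + poly_dt f t"

text \<open>F_{s,t} = K_{mu_s} o G_{mu_t}; in the variable w = 1/z, 1/F_{s,t} is the power
  series phi = fps_inv(g_s) oo g_t.  K_{s,t}(Res_z) = Res_{F(z)} reads
  sum_n K(x^n) w^(n+1) = sum_k x^k phi^(k+1), i.e. K(x^n) = sum_k [w^(n+1)] phi^(k+1) x^k.\<close>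
definition phi_st :: "(real \<Rightarrow> real measure) \<Rightarrow> real \<Rightarrow> real \<Rightarrow> complex fps" where
  "phi_st mut s t = fps_inv (G_fps (moments (mut s))) oo G_fps (moments (mut t))"

definition K_op :: "(real \<Rightarrow> real measure) \<Rightarrow> real \<Rightarrow> real \<Rightarrow> complex poly \<Rightarrow> complex poly" where
  "K_op mut s t p = (\<Sum>n\<le>degree p. smult (coeff p n)
       (\<Sum>k\<le>n. monom ((phi_st mut s t ^ (k + 1)) $ (n + 1)) k))"

definition martingale_poly :: "(real \<Rightarrow> real measure) \<Rightarrow> (real \<Rightarrow> complex poly) \<Rightarrow> bool" where
  "martingale_poly mut p \<longleftrightarrow> (\<forall>s t. 0 \<le> s \<longrightarrow> s < t \<longrightarrow> K_op mut s t (p t) = p s)"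

end

theory Submission
  imports Defs
begin

unbundle no vec_syntax

definition Cf :: "(nat \<Rightarrow> complex) \<Rightarrow> complex fps" where
  "Cf m = inverse (fps_shift 1 (fps_inv (G_fps m))) - 1"

lemma G_fps_0[simp]: "G_fps m $ 0 = 0" and G_fps_1[simp]: "G_fps m $ Suc 0 = m 0"
  by (simp_all add: G_fps_def)

lemma fps_inv_nth0[simp]: "fps_inv a $ 0 = 0"
  by (simp add: fps_inv_def)

lemma fps_inv_nth1[simp]: "fps_inv (a::'a::field fps) $ Suc 0 = 1 / a $ Suc 0"
  by (simp add: fps_inv_def)

lemma Cf_0: "m 0 = 1 \<Longrightarrow> Cf m $ 0 = 0"
  by (simp add: Cf_def fps_inv_nth1)

lemma fc_Cf: "m 0 = 1 \<Longrightarrow> free_cumulant m n = Cf m $ n"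
  using Cf_0[of m] unfolding free_cumulant_def Cf_def by simp

lemma X_shift: "(f::'a::comm_ring_1 fps) $ 0 = 0 \<Longrightarrow> fps_X * fps_shift 1 f = f"
  by (intro fps_ext) simp

lemma func_eq:
  assumes m0: "m 0 = 1"
  shows "Abs_fps m = 1 + (Cf m oo (fps_X * Abs_fps m))"
proof -
  define g where "g = G_fps m"
  define u where "u = fps_inv g"
  define v where "v = fps_shift 1 u"
  have g0: "g $ 0 = 0" and g1: "g $ 1 = 1" using m0 by (simp_all add: g_def)
  have uv: "u = fps_X * v" unfolding v_def by (rule X_shift[symmetric]) (simp add: u_def)
  have v0: "v $ 0 = 1" using g1 by (simp add: v_def u_def)
  have "u oo g = fps_X" unfolding u_def using g0 g1 by (intro fps_inv) auto
  hence "(fps_X oo g) * (v oo g) = fps_X" unfolding uv by (subst (asm) fps_compose_mult_distrib[OF g0])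
  hence "g * (v oo g) = fps_X" by (subst (asm) fps_X_fps_compose_startby0[OF g0])
  hence "fps_X * (Abs_fps m * (v oo g)) = fps_X * 1" by (simp add: g_def G_fps_def mult.assoc)
  hence "Abs_fps m * (v oo g) = 1" by (subst (asm) mult_left_cancel) auto
  hence "inverse (v oo g) = Abs_fps m" by (metis fps_inverse_unique mult.commute)
  hence A: "Abs_fps m = inverse v oo g" using fps_inverse_compose[OF g0, of v] v0 by simp
  have B: "inverse v = 1 + Cf m" by (simp add: Cf_def v_def u_def g_def)
  have "Abs_fps m = (1 + Cf m) oo g" using A B by simp
  also have "\<dots> = 1 + (Cf m oo g)" by (rule trans[OF fps_compose_add_distrib], simp)
  finally show ?thesis unfolding g_def G_fps_def .
qed

lemma Cf_unique:
  assumes "m 0 = 1" "m' 0 = 1" "Cf m = Cf m'"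
  shows "m = m'"
proof -
  define g where "g = G_fps m"
  define g' where "g' = G_fps m'"
  have v0: "fps_shift 1 (fps_inv g) $ 0 \<noteq> 0" "fps_shift 1 (fps_inv g') $ 0 \<noteq> 0"
    using assms by (simp_all add: g_def g'_def fps_inv_nth1)
  have "inverse (fps_shift 1 (fps_inv g)) = inverse (fps_shift 1 (fps_inv g'))"
    using assms(3) by (simp add: Cf_def g_def g'_def)
  hence "inverse (inverse (fps_shift 1 (fps_inv g))) = inverse (inverse (fps_shift 1 (fps_inv g')))"
    by simp
  hence "fps_shift 1 (fps_inv g) = fps_shift 1 (fps_inv g')" using v0 by simp
  hence "fps_X * fps_shift 1 (fps_inv g) = fps_X * fps_shift 1 (fps_inv g')" by simp
  hence "fps_inv g = fps_inv g'" using X_shift[of "fps_inv g"] X_shift[of "fps_inv g'"] by simp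
  hence "fps_inv (fps_inv g) = fps_inv (fps_inv g')" by simp
  hence "g = g'" using assms by (simp add: fps_inv_idempotent g_def g'_def)
  hence "fps_X * Abs_fps m = fps_X * Abs_fps m'" by (simp add: g_def g'_def G_fps_def)
  hence "Abs_fps m = Abs_fps m'" by (subst (asm) mult_left_cancel) auto
  thus ?thesis by (metis fps_nth_Abs_fps ext)
qed

lemma Cf_exists:
  assumes C0: "(C::complex fps) $ 0 = 0"
  shows "\<exists>m. m 0 = 1 \<and> Cf m = C"
proof -
  define w where "w = 1 + C"
  define v where "v = inverse w"
  define u where "u = fps_X * v"
  define g where "g = fps_inv u"
  define m where "m = (\<lambda>n. g $ Suc n)"
  have w0: "w $ 0 = 1" using C0 by (simp add: w_def)
  have v0: "v $ 0 = 1" using w0 by (simp add: v_def)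
  have u0: "u $ 0 = 0" and u1: "u $ 1 = 1" using v0 by (simp_all add: u_def)
  have g0: "g $ 0 = 0" and g1: "g $ 1 = 1" using u1 by (simp_all add: g_def fps_inv_nth1)
  have m0: "m 0 = 1" using g1 by (simp add: m_def)
  have "G_fps m = g" unfolding G_fps_def m_def
    by (intro fps_ext) (simp add: g0 split: nat.split)
  hence "fps_inv (G_fps m) = u" using u0 u1 by (simp add: g_def fps_inv_idempotent)
  moreover have "fps_shift 1 (fps_X * v) = v" by (intro fps_ext) simp
  ultimately have "Cf m = inverse v - 1" by (simp add: Cf_def u_def)
  also have "\<dots> = C" using w0 by (simp add: v_def w_def)
  finally show ?thesis using m0 by blast
qed

lemma boxplus_char:
  assumes nu0: "nu 0 = 1" and mu0: "mu 0 = 1"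
  shows "boxplus_t nu mu t 0 = 1 \<and> Cf (boxplus_t nu mu t) = Cf nu + fps_const (of_real t) * Cf mu"
proof -
  define C where "C = Cf nu + fps_const (of_real t) * Cf mu"
  have C0: "C $ 0 = 0" using nu0 mu0 by (simp add: C_def Cf_0)
  obtain m where m: "m 0 = 1" "Cf m = C" using Cf_exists[OF C0] by blast
  let ?P = "\<lambda>m. m 0 = 1 \<and>
      (\<forall>n\<ge>1. free_cumulant m n = free_cumulant nu n + complex_of_real t * free_cumulant mu n)"
  have Pm: "?P m" using m nu0 mu0 by (simp add: fc_Cf C_def)
  have uniq: "m' = m" if "?P m'" for m'
  proof -
    have "Cf m' = C"
    proof (intro fps_ext)
      fix n show "Cf m' $ n = C $ n"
        using that nu0 mu0 C0 by (cases "n = 0") (auto simp: Cf_0 fc_Cf C_def)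
    qed
    thus ?thesis using Cf_unique[of m' m] that m by simp
  qed
  have "boxplus_t nu mu t = m" unfolding boxplus_t_def
    by (rule the_equality[of ?P, OF Pm uniq])
  thus ?thesis using m by (simp add: C_def)
qed

definition HD :: "(real \<Rightarrow> complex fps) \<Rightarrow> complex fps \<Rightarrow> nat \<Rightarrow> real \<Rightarrow> real set \<Rightarrow> bool" where
  "HD F F' N t S \<longleftrightarrow> (\<forall>i\<le>N. ((\<lambda>s. F s $ i) has_vector_derivative F' $ i) (at t within S))"

lemma HD_cong: "HD F A N t S \<Longrightarrow> A = B \<Longrightarrow> HD F B N t S" by simp

lemma HD_mono: "HD F A N t S \<Longrightarrow> N' \<le> N \<Longrightarrow> HD F A N' t S" by (auto simp: HD_def)

lemma HD_const: "HD (\<lambda>s. c) 0 N t S"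
  by (simp add: HD_def)

lemma HD_add: "HD F F' N t S \<Longrightarrow> HD G G' N t S \<Longrightarrow> HD (\<lambda>s. F s + G s) (F' + G') N t S"
  by (auto simp: HD_def intro!: has_vector_derivative_add)

lemma HD_mult:
  assumes F: "HD F F' N t S" and G: "HD G G' N t S"
  shows "HD (\<lambda>s. F s * G s) (F' * G t + F t * G') N t S"
  unfolding HD_def
proof (intro allI impI)
  fix i assume i: "i \<le> N"
  have "((\<lambda>s. \<Sum>j=0..i. F s $ j * G s $ (i - j)) has_vector_derivative
          (\<Sum>j=0..i. F t $ j * G' $ (i - j) + F' $ j * G t $ (i - j))) (at t within S)"
    using F G i by (auto simp: HD_def intro!: has_vector_derivative_sum has_vector_derivative_mult)
  moreover have "(\<Sum>j=0..i. F t $ j * G' $ (i - j) + F' $ j * G t $ (i - j)) = (F' * G t + F t * G') $ i"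
    by (simp add: fps_mult_nth sum.distrib)
  ultimately show "((\<lambda>s. (F s * G s) $ i) has_vector_derivative (F' * G t + F t * G') $ i) (at t within S)"
    by (simp add: fps_mult_nth)
qed

lemma HD_power:
  assumes F: "HD F F' N t S"
  shows "HD (\<lambda>s. F s ^ k) (fps_const (of_nat k) * F t ^ (k - 1) * F') N t S"
proof (induction k)
  case 0
  then show ?case using HD_const[of 1 N t S] by simp
next
  case (Suc k)
  have "HD (\<lambda>s. F s * F s ^ k) (F' * F t ^ k + F t * (fps_const (of_nat k) * F t ^ (k - 1) * F')) N t S"
    by (rule HD_mult[OF F Suc])
  moreover have "F' * F t ^ k + F t * (fps_const (of_nat k) * F t ^ (k - 1) * F') =
      fps_const (of_nat (Suc k)) * F t ^ (Suc k - 1) * F'"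
  proof (cases k)
    case 0 then show ?thesis by simp
  next
    case (Suc k')
    have e: "\<And>n. fps_const (of_nat n :: complex) = of_nat n" by (simp add: fps_of_nat)
    show ?thesis unfolding e Suc by (simp add: algebra_simps)
  qed
  ultimately show ?case by simp
qed

lemma HD_sum:
  assumes "finite I" "\<And>j. j \<in> I \<Longrightarrow> HD (F j) (F' j) N t S"
  shows "HD (\<lambda>s. \<Sum>j\<in>I. F j s) (\<Sum>j\<in>I. F' j) N t S"
  using assms by (auto simp: HD_def fps_sum_nth intro!: has_vector_derivative_sum)

lemma pow_nth_zero:
  assumes "(A::'a::comm_ring_1 fps) $ 0 = 0" "l < j"
  shows "(A ^ j) $ l = 0"
proof -
  have "A = fps_X * fps_shift 1 A" using X_shift[OF assms(1)] by simp
  hence "A ^ j = fps_X ^ j * fps_shift 1 A ^ j" by (metis power_mult_distrib)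
  thus ?thesis using assms(2) by (simp add: fps_X_power_mult_nth)
qed

lemma mult_nth_agree:
  assumes "\<And>l. l < i \<Longrightarrow> P $ l = Q $ l" "(B::'a::comm_ring_1 fps) $ 0 = 0"
  shows "(P * B) $ i = (Q * B) $ i"
proof -
  have "(P * B) $ i = (\<Sum>l=0..i. P $ l * B $ (i - l))" by (simp add: fps_mult_nth)
  also have "\<dots> = (\<Sum>l=0..i. Q $ l * B $ (i - l))"
  proof (rule sum.cong)
    fix l assume "l \<in> {0..i}"
    then show "P $ l * B $ (i - l) = Q $ l * B $ (i - l)"
      using assms by (cases "l < i") auto
  qed simp
  finally show ?thesis by (simp add: fps_mult_nth)
qed

lemma compose_deriv_coeff:
  fixes u A A' :: "'a::idom fps"
  assumes A0: "A $ 0 = 0" and A'0: "A' $ 0 = 0"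
  shows "(\<Sum>j=0..i. u $ j * (of_nat j * (A ^ (j - 1) * A') $ i)) = ((fps_deriv u oo A) * A') $ i"
proof -
  define P where "P = (\<Sum>j=0..i. fps_const (u $ j * of_nat j) * A ^ (j - 1))"
  have "(P * A') $ i = (\<Sum>j=0..i. (fps_const (u $ j * of_nat j) * (A ^ (j - 1) * A')) $ i)"
    unfolding P_def sum_distrib_right fps_sum_nth mult.assoc ..
  also have "\<dots> = (\<Sum>j=0..i. u $ j * (of_nat j * (A ^ (j - 1) * A') $ i))"
    by (intro sum.cong refl) (simp only: fps_mult_left_const_nth mult.assoc)
  finally have L: "(\<Sum>j=0..i. u $ j * (of_nat j * (A ^ (j - 1) * A') $ i)) = (P * A') $ i" ..
  have "P $ l = (fps_deriv u oo A) $ l" if l: "l < i" for l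
  proof -
    obtain i' where i': "i = Suc i'" using l by (cases i) auto
    have "P $ l = (\<Sum>j=0..i. u $ j * of_nat j * (A ^ (j - 1)) $ l)"
      by (simp add: P_def fps_sum_nth)
    also have "\<dots> = (\<Sum>j=0..i'. u $ Suc j * of_nat (Suc j) * (A ^ j) $ l)"
      unfolding i' by (subst sum.atLeast0_atMost_Suc_shift) simp
    also have "\<dots> = (\<Sum>j=0..l. u $ Suc j * of_nat (Suc j) * (A ^ j) $ l)"
      using l i' by (intro sum.mono_neutral_right) (auto simp: pow_nth_zero[OF A0])
    also have "\<dots> = (fps_deriv u oo A) $ l"
      unfolding fps_compose_nth fps_deriv_nth
      by (intro sum.cong refl) (simp only: mult.commute mult.left_commute Suc_eq_plus1)
    finally show ?thesis .
  qed
  hence "(P * A') $ i = ((fps_deriv u oo A) * A') $ i"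
    by (intro mult_nth_agree A'0) auto
  with L show ?thesis by simp
qed

lemma HD_compose:
  assumes A: "HD A A' N t S" and A0: "A t $ 0 = 0" and A'0: "A' $ 0 = 0"
  shows "HD (\<lambda>s. u oo A s) ((fps_deriv u oo A t) * A') N t S"
  unfolding HD_def
proof (intro allI impI)
  fix i assume i: "i \<le> N"
  have "HD (\<lambda>s. A s ^ j) (fps_const (of_nat j) * A t ^ (j - 1) * A') N t S" for j
    by (rule HD_power[OF A])
  hence "((\<lambda>s. \<Sum>j=0..i. u $ j * (A s ^ j) $ i) has_vector_derivative
          (\<Sum>j=0..i. u $ j * (fps_const (of_nat j) * A t ^ (j - 1) * A') $ i)) (at t within S)"
    using i by (auto simp: HD_def intro!: has_vector_derivative_sum has_vector_derivative_mult_right)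
  moreover have "(\<Sum>j=0..i. u $ j * (fps_const (of_nat j) * A t ^ (j - 1) * A') $ i) =
     (\<Sum>j=0..i. u $ j * (of_nat j * (A t ^ (j - 1) * A') $ i))"
    by (simp only: mult.assoc fps_mult_left_const_nth)
  ultimately show "((\<lambda>s. (u oo A s) $ i) has_vector_derivative ((fps_deriv u oo A t) * A') $ i) (at t within S)"
    unfolding fps_compose_nth compose_deriv_coeff[OF A0 A'0] by simp
qed

lemma T_identity:
  fixes M C r :: "complex fps"
  assumes Meq: "M = 1 + (C oo (fps_X * M))" and r0: "r $ 0 = 0"
  shows "fps_deriv (fps_X * M) * (fps_X * (fps_shift 1 r oo (fps_X * M))) =
         (r oo (fps_X * M)) + (fps_deriv C oo (fps_X * M)) *
            (fps_X * (fps_deriv (fps_X * M) * (fps_X * (fps_shift 1 r oo (fps_X * M)))))"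
proof -
  define A where "A = fps_X * M"
  define S where "S = fps_shift 1 r oo A"
  define P where "P = fps_deriv C oo A"
  define Q where "Q = fps_deriv A"
  have A0: "A $ 0 = 0" by (simp add: A_def)
  have "fps_deriv M = fps_deriv (C oo A)" using Meq unfolding A_def[symmetric]
    by (metis fps_deriv_1 add_0 fps_deriv_add)
  also have "\<dots> = P * Q" unfolding P_def Q_def by (rule fps_compose_deriv[OF A0])
  finally have Md: "fps_deriv M = P * Q" .
  have "Q = M + fps_X * fps_deriv M" unfolding Q_def A_def by simp
  hence Qe: "Q = M + fps_X * (P * Q)" using Md by simp
  have "r = fps_X * fps_shift 1 r" using X_shift[OF r0] by simp
  hence "r oo A = (fps_X oo A) * S" unfolding S_def
    by (metis fps_compose_mult_distrib[OF A0])
  hence rA: "r oo A = fps_X * M * S" by (simp add: A0 A_def)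
  have "Q * (fps_X * S) = fps_X * S * (M + fps_X * (P * Q))" using Qe by (metis mult.commute)
  also have "\<dots> = fps_X * M * S + P * (fps_X * (Q * (fps_X * S)))" by (simp add: algebra_simps)
  finally show ?thesis unfolding rA[symmetric] by (simp add: A_def S_def P_def Q_def)
qed

definition Af :: "(nat \<Rightarrow> complex) \<Rightarrow> (nat \<Rightarrow> complex) \<Rightarrow> real \<Rightarrow> complex fps" where
  "Af nu mu t = fps_X * Abs_fps (boxplus_t nu mu t)"

definition Sf :: "(nat \<Rightarrow> complex) \<Rightarrow> (nat \<Rightarrow> complex) \<Rightarrow> real \<Rightarrow> complex fps" where
  "Sf nu mu t = fps_shift 1 (Cf mu) oo Af nu mu t"

definition Tf :: "(nat \<Rightarrow> complex) \<Rightarrow> (nat \<Rightarrow> complex) \<Rightarrow> real \<Rightarrow> complex fps" where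
  "Tf nu mu t = fps_deriv (Af nu mu t) * (fps_X * Sf nu mu t)"

lemma HD_ofreal: "HD (\<lambda>s. fps_const (complex_of_real s)) 1 N t S"
  unfolding HD_def
proof (intro allI impI)
  fix i :: nat
  show "((\<lambda>s. fps_const (complex_of_real s) $ i) has_vector_derivative 1 $ i) (at t within S)"
  proof (cases "i = 0")
    case True
    have "((\<lambda>s. complex_of_real s) has_vector_derivative of_real 1) (at t within S)"
      by (intro has_vector_derivative_of_real DERIV_ident)
    then show ?thesis using True by simp
  next
    case False
    then show ?thesis by simp
  qed
qed

lemma core_HD:
  assumes nu0: "nu 0 = 1" and mu0: "mu 0 = 1"
  shows "HD (Af nu mu) (fps_X * Tf nu mu t) N t S"
proof (induction N)
  case 0
  then show ?case by (simp add: HD_def Af_def)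
next
  case (Suc N)
  note IH = Suc
  let ?A' = "fps_X * Tf nu mu t"
  have A0: "Af nu mu s $ 0 = 0" for s by (simp add: Af_def)
  have A'0: "?A' $ 0 = 0" by simp
  have last: "((\<lambda>s. Af nu mu s $ Suc N) has_vector_derivative ?A' $ Suc N) (at t within S)"
  proof (cases "N = 0")
    case True
    have "Af nu mu s $ Suc 0 = 1" for s using boxplus_char[of nu mu, OF nu0 mu0] by (simp add: Af_def)
    moreover have "Tf nu mu t $ 0 = 0" by (simp add: Tf_def)
    ultimately show ?thesis using True by simp
  next
    case False
    define C where "C = (\<lambda>s. Cf nu + fps_const (of_real s) * Cf mu)"
    have Ms: "Abs_fps (boxplus_t nu mu s) = 1 + (C s oo Af nu mu s)" for s
      using func_eq[of "boxplus_t nu mu s"] boxplus_char[of nu mu s, OF nu0 mu0]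
      by (simp add: C_def Af_def)
    have CA: "C s oo Af nu mu s = (Cf nu oo Af nu mu s) + fps_const (of_real s) * (Cf mu oo Af nu mu s)" for s
      by (simp add: C_def fps_compose_add_distrib fps_const_mult_apply_left)
    have eqN: "Af nu mu s $ Suc N = ((Cf nu oo Af nu mu s) + fps_const (of_real s) * (Cf mu oo Af nu mu s)) $ N" for s
    proof -
      have "Af nu mu s $ Suc N = Abs_fps (boxplus_t nu mu s) $ N" by (simp add: Af_def)
      also have "\<dots> = (C s oo Af nu mu s) $ N" using False by (subst Ms) simp
      finally show ?thesis by (simp add: CA)
    qed
    have H: "HD (\<lambda>s. (Cf nu oo Af nu mu s) + fps_const (of_real s) * (Cf mu oo Af nu mu s))
       ((fps_deriv (Cf nu) oo Af nu mu t) * ?A' +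
        (1 * (Cf mu oo Af nu mu t) + fps_const (of_real t) * ((fps_deriv (Cf mu) oo Af nu mu t) * ?A'))) N t S"
      by (intro HD_add HD_mult HD_ofreal HD_compose[OF IH A0 A'0])
    have "Tf nu mu t = (Cf mu oo Af nu mu t) + (fps_deriv (C t) oo Af nu mu t) * ?A'"
    proof -
      have M: "Abs_fps (boxplus_t nu mu t) = 1 + (C t oo (fps_X * Abs_fps (boxplus_t nu mu t)))"
        using Ms[of t] by (simp add: Af_def)
      have r0: "Cf mu $ 0 = 0" using mu0 by (rule Cf_0)
      show ?thesis using T_identity[OF M r0] by (simp add: Tf_def Sf_def Af_def)
    qed
    also have "\<dots> = (fps_deriv (Cf nu) oo Af nu mu t) * ?A' +
        (1 * (Cf mu oo Af nu mu t) + fps_const (of_real t) * ((fps_deriv (Cf mu) oo Af nu mu t) * ?A'))"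
      by (simp add: C_def fps_compose_add_distrib fps_const_mult_apply_left[symmetric] algebra_simps)
    finally have TT: "Tf nu mu t = \<dots>" .
    have "HD (\<lambda>s. (Cf nu oo Af nu mu s) + fps_const (of_real s) * (Cf mu oo Af nu mu s))
       (Tf nu mu t) N t S" using H unfolding TT[symmetric] .
    hence "((\<lambda>s. ((Cf nu oo Af nu mu s) + fps_const (of_real s) * (Cf mu oo Af nu mu s)) $ N)
       has_vector_derivative Tf nu mu t $ N) (at t within S)" unfolding HD_def by blast
    then show ?thesis unfolding eqN by simp
  qed
  show ?case unfolding HD_def
  proof (intro allI impI)
    fix i assume "i \<le> Suc N"
    then consider "i \<le> N" | "i = Suc N" by linarith
    then show "((\<lambda>s. Af nu mu s $ i) has_vector_derivative ?A' $ i) (at t within S)"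
      using IH last by cases (auto simp: HD_def)
  qed
qed

lemma L1:
  fixes h :: "nat \<Rightarrow> 'a::comm_ring_1"
  assumes h: "\<And>b. b > d \<Longrightarrow> h b = 0"
  shows "(\<Sum>b\<le>d. h (b + c) * G $ b) = (\<Sum>q\<le>d. h q * (fps_X ^ c * G) $ q)"
proof -
  define F where "F = (\<lambda>q. h q * (fps_X ^ c * G) $ q)"
  have "(\<Sum>q\<le>d. F q) = (\<Sum>q\<in>{0..d + c}. F q)"
    by (rule sum.mono_neutral_left) (auto simp: F_def h)
  also have "\<dots> = (\<Sum>q\<in>{0..<c}. F q) + (\<Sum>q\<in>{c..d + c}. F q)"
    by (rule sum.atLeastLessThan_concat[symmetric, where n = c and p = "Suc (d + c)", 
          unfolded atLeastLessThanSuc_atLeastAtMost]) auto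
  also have "(\<Sum>q\<in>{0..<c}. F q) = 0" by (auto simp: F_def fps_X_power_mult_nth)
  also have "(\<Sum>q\<in>{c..d + c}. F q) = (\<Sum>b\<in>{0..d}. F (b + c))"
    using sum.shift_bounds_cl_nat_ivl[of F 0 c d] by simp
  also have "\<dots> = (\<Sum>b\<le>d. h (b + c) * G $ b)"
    by (simp add: F_def fps_X_power_mult_nth atLeast0AtMost)
  finally show ?thesis by (simp add: F_def)
qed

lemma CONV:
  fixes h :: "nat \<Rightarrow> 'a::comm_ring_1"
  assumes h: "\<And>b. b > d \<Longrightarrow> h b = 0"
  shows "(\<Sum>a\<le>d. F $ a * (\<Sum>b\<le>d. h (a + b) * G $ b)) = (\<Sum>q\<le>d. h q * (F * G) $ q)"
proof -
  have "(\<Sum>a\<le>d. F $ a * (\<Sum>b\<le>d. h (a + b) * G $ b)) =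
        (\<Sum>a\<le>d. F $ a * (\<Sum>q\<le>d. h q * (fps_X ^ a * G) $ q))"
  proof (intro sum.cong refl)
    fix a
    have "(\<Sum>b\<le>d. h (a + b) * G $ b) = (\<Sum>b\<le>d. h (b + a) * G $ b)" by (simp add: add.commute)
    also have "\<dots> = (\<Sum>q\<le>d. h q * (fps_X ^ a * G) $ q)" by (rule L1[OF h])
    finally show "F $ a * (\<Sum>b\<le>d. h (a + b) * G $ b) = F $ a * (\<Sum>q\<le>d. h q * (fps_X ^ a * G) $ q)" by simp
  qed
  also have "\<dots> = (\<Sum>q\<le>d. h q * (\<Sum>a\<le>d. F $ a * (fps_X ^ a * G) $ q))"
    unfolding sum_distrib_left by (subst sum.swap) (simp add: mult_ac)
  also have "\<dots> = (\<Sum>q\<le>d. h q * (F * G) $ q)"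
  proof (intro sum.cong refl)
    fix q assume q: "q \<in> {..d}"
    have "(\<Sum>a\<le>d. F $ a * (fps_X ^ a * G) $ q) = (\<Sum>a=0..q. F $ a * G $ (q - a))"
      using q by (intro sum.mono_neutral_cong_right) (auto simp: fps_X_power_mult_nth)
    then show "h q * (\<Sum>a\<le>d. F $ a * (fps_X ^ a * G) $ q) = h q * (F * G) $ q"
      by (simp add: fps_mult_nth)
  qed
  finally show ?thesis .
qed

definition W :: "nat \<Rightarrow> nat \<Rightarrow> nat list set" where
  "W k d = {xs. set xs \<subseteq> {..d} \<and> length xs = k}"

lemma finite_W: "finite (W k d)"
  unfolding W_def by (rule finite_lists_length_eq) simp

lemma LL:
  fixes h :: "nat \<Rightarrow> 'a::comm_ring_1"
  assumes h: "\<And>b. b > d \<Longrightarrow> h b = 0"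
  shows "(\<Sum>xs\<in>W k d. h (sum_list xs) * prod_list (map m xs)) = (\<Sum>b\<le>d. h b * (Abs_fps m ^ k) $ b)"
  using h
proof (induction k arbitrary: h)
  case 0
  have "W 0 d = {[]}" by (auto simp: W_def)
  moreover have "(\<Sum>b\<le>d. h b * (1::'a fps) $ b) = h 0"
  proof -
    have "(\<Sum>b\<le>d. h b * (1::'a fps) $ b) = (\<Sum>b\<le>d. if b = 0 then h b else 0)"
      by (intro sum.cong refl) (simp add: fps_one_nth)
    also have "\<dots> = h 0" by (subst sum.delta) auto
    finally show ?thesis .
  qed
  ultimately show ?case by simp
next
  case (Suc k)
  have WS: "W (Suc k) d = (\<lambda>(xs, n). n#xs) ` (W k d \<times> {..d})"
    unfolding W_def by (rule lists_length_Suc_eq)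
  have inj: "inj_on (\<lambda>(xs, n). n#xs) (W k d \<times> {..d})" by (auto simp: inj_on_def)
  have "(\<Sum>xs\<in>W (Suc k) d. h (sum_list xs) * prod_list (map m xs)) =
        (\<Sum>(xs, a)\<in>W k d \<times> {..d}. h (a + sum_list xs) * (m a * prod_list (map m xs)))"
    unfolding WS by (subst sum.reindex[OF inj]) (simp add: case_prod_beta)
  also have "\<dots> = (\<Sum>xs\<in>W k d. \<Sum>a\<le>d. h (a + sum_list xs) * (m a * prod_list (map m xs)))"
    by (rule sum.cartesian_product[symmetric])
  also have "\<dots> = (\<Sum>a\<le>d. m a * (\<Sum>xs\<in>W k d. h (a + sum_list xs) * prod_list (map m xs)))"
    by (subst sum.swap) (simp add: sum_distrib_left mult_ac)
  also have "\<dots> = (\<Sum>a\<le>d. Abs_fps m $ a * (\<Sum>b\<le>d. h (a + b) * (Abs_fps m ^ k) $ b))"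
  proof (intro sum.cong refl)
    fix a assume "a \<in> {..d}"
    have "(\<Sum>xs\<in>W k d. h (a + sum_list xs) * prod_list (map m xs)) = (\<Sum>b\<le>d. h (a + b) * (Abs_fps m ^ k) $ b)"
      by (rule Suc.IH) (use Suc.prems in auto)
    then show "m a * (\<Sum>xs\<in>W k d. h (a + sum_list xs) * prod_list (map m xs)) =
       Abs_fps m $ a * (\<Sum>b\<le>d. h (a + b) * (Abs_fps m ^ k) $ b)" by simp
  qed
  also have "\<dots> = (\<Sum>q\<le>d. h q * (Abs_fps m * Abs_fps m ^ k) $ q)"
    by (rule CONV) (use Suc.prems in auto)
  finally show ?case by simp
qed

lemma partial_pow_eq:
  "partial_pow k p e = fact k * (if length e = Suc k then coeff p (sum_list e + k) else 0)"
proof (induction k arbitrary: e)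
  case 0
  show ?case
  proof (cases "length e = 1")
    case True
    then obtain a where "e = [a]" by (cases e) auto
    then show ?thesis by simp
  qed simp
next
  case (Suc k)
  show ?case
  proof (cases "length e = Suc (Suc k)")
    case True
    obtain ys b where ys: "e = ys @ [b]" using True by (cases e rule: rev_cases) auto
    with True obtain xs a where xs0: "ys = xs @ [a]" by (cases ys rule: rev_cases) auto
    have e: "e = xs @ [a, b]" using ys xs0 by simp
    have xs: "length xs = k" using True e by simp
    have "dlast (partial_pow k p) e = partial_pow k p (xs @ [a + b + 1])"
      unfolding dlast_def using e xs by (simp add: nth_append)
    also have "\<dots> = fact k * coeff p (sum_list e + Suc k)"
      using xs by (simp add: Suc.IH e)
    finally show ?thesis using True by (simp add: algebra_simps)
  next
    case False
    have "dlast (partial_pow k p) e = 0"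
      unfolding dlast_def using False by (auto simp: Suc.IH)
    then show ?thesis using False by simp
  qed
qed

lemma dx_first_pp:
  "dx_first (partial_pow k p) (j # rest) =
     of_nat (Suc j) * fact k * (if length rest = k then coeff p (Suc j + sum_list rest + k) else 0)"
  by (simp add: dx_first_def partial_pow_eq)

lemma coeff_Id_nu_app:
  "coeff (Id_nu_app m k (dx_first (partial_pow k p))) j =
     of_nat (Suc j) * fact k *
       (\<Sum>xs\<in>W k (degree p). coeff p (Suc j + sum_list xs + k) * prod_list (map m xs))"
proof -
  let ?T = "dx_first (partial_pow k p)"
  define g where "g = (\<lambda>j. \<Sum>rest \<in> {rest. length rest = k \<and> ?T (j # rest) \<noteq> 0}.
                     ?T (j # rest) * prod_list (map m rest))"
  have geq: "g j = of_nat (Suc j) * fact k *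
       (\<Sum>xs\<in>W k (degree p). coeff p (Suc j + sum_list xs + k) * prod_list (map m xs))" for j
  proof -
    have sub: "{rest. length rest = k \<and> ?T (j # rest) \<noteq> 0} \<subseteq> W k (degree p)"
    proof
      fix rest assume "rest \<in> {rest. length rest = k \<and> ?T (j # rest) \<noteq> 0}"
      hence len: "length rest = k" and nz: "coeff p (Suc j + sum_list rest + k) \<noteq> 0"
        by (auto simp: dx_first_pp)
      have "Suc j + sum_list rest + k \<le> degree p" using nz le_degree by blast
      hence "set rest \<subseteq> {..degree p}" using member_le_sum_list[of _ rest] by fastforce
      thus "rest \<in> W k (degree p)" using len by (simp add: W_def)
    qed
    have "g j = (\<Sum>rest\<in>W k (degree p). ?T (j # rest) * prod_list (map m rest))"
      unfolding g_def by (rule sum.mono_neutral_left[OF finite_W sub]) (auto simp: W_def)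
    also have "\<dots> = (\<Sum>xs\<in>W k (degree p). of_nat (Suc j) * fact k *
          (coeff p (Suc j + sum_list xs + k) * prod_list (map m xs)))"
      by (intro sum.cong refl) (auto simp: dx_first_pp W_def)
    finally show ?thesis by (simp add: sum_distrib_left)
  qed
  have "g i = 0" if "i > degree p" for i
  proof -
    have "coeff p (Suc i + sum_list xs + k) = 0" for xs using that by (simp add: coeff_eq_0)
    thus ?thesis by (simp add: geq)
  qed
  hence "coeff (Abs_poly g) = g" by (rule coeff_Abs_poly)
  thus ?thesis by (simp add: Id_nu_app_def g_def[symmetric] geq)
qed

lemma Sg_coeff:
  fixes c :: "nat \<Rightarrow> complex"
  assumes q: "q \<le> d"
  shows "(fps_X ^ Suc j * (Abs_fps (\<lambda>k. c (Suc k)) oo (fps_X * Abs_fps m))) $ q =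
         (\<Sum>k\<le>d. c (Suc k) * (fps_X ^ (Suc j + k) * Abs_fps m ^ k) $ q)"
proof (cases "q < Suc j")
  case True
  then show ?thesis by (simp add: power_add mult.assoc fps_X_power_mult_nth; arith)
next
  case False
  define r where "r = q - Suc j"
  have r: "r \<le> d" using q by (simp add: r_def)
  have "(fps_X ^ Suc j * (Abs_fps (\<lambda>k. c (Suc k)) oo (fps_X * Abs_fps m))) $ q =
        (Abs_fps (\<lambda>k. c (Suc k)) oo (fps_X * Abs_fps m)) $ r"
    by (subst fps_X_power_mult_nth) (use False in \<open>simp add: r_def\<close>)
  also have "\<dots> = (\<Sum>k=0..r. c (Suc k) * ((fps_X * Abs_fps m) ^ k) $ r)"
    by (simp add: fps_compose_nth)
  also have "\<dots> = (\<Sum>k\<le>d. c (Suc k) * ((fps_X * Abs_fps m) ^ k) $ r)"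
    using r by (intro sum.mono_neutral_left) (auto simp: pow_nth_zero)
  also have "\<dots> = (\<Sum>k\<le>d. c (Suc k) * (fps_X ^ (Suc j + k) * Abs_fps m ^ k) $ q)"
  proof (intro sum.cong refl)
    fix k
    have "fps_X ^ (Suc j + k) * Abs_fps m ^ k = fps_X ^ Suc j * (fps_X * Abs_fps m) ^ k"
      by (simp add: power_add power_mult_distrib mult.assoc)
    then show "c (Suc k) * ((fps_X * Abs_fps m) ^ k) $ r = c (Suc k) * (fps_X ^ (Suc j + k) * Abs_fps m ^ k) $ q"
      by (simp only:) (subst fps_X_power_mult_nth, use False in \<open>simp add: r_def\<close>)
  qed
  finally show ?thesis .
qed

lemma sumterm_coeff:
  fixes c :: "nat \<Rightarrow> complex"
  shows "coeff (\<Sum>n\<in>{1..Suc (degree p)}. smult (c n / fact (n - 1))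
            (Id_nu_app m (n - 1) (dx_first (partial_pow (n - 1) p)))) j =
     of_nat (Suc j) * (\<Sum>q\<le>degree p. coeff p q *
            (fps_X ^ Suc j * (Abs_fps (\<lambda>k. c (Suc k)) oo (fps_X * Abs_fps m))) $ q)"
proof -
  define d where "d = degree p"
  have hz: "coeff p b = 0" if "b > d" for b using that by (simp add: d_def coeff_eq_0)
  have "coeff (\<Sum>n\<in>{1..Suc d}. smult (c n / fact (n - 1))
            (Id_nu_app m (n - 1) (dx_first (partial_pow (n - 1) p)))) j =
        (\<Sum>n\<in>{Suc 0..Suc d}. c n / fact (n - 1) * coeff (Id_nu_app m (n - 1) (dx_first (partial_pow (n - 1) p))) j)"
    by (simp add: coeff_sum)
  also have "\<dots> = (\<Sum>k\<in>{0..d}. c (Suc k) / fact k * coeff (Id_nu_app m k (dx_first (partial_pow k p))) j)"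
    by (subst sum.shift_bounds_cl_Suc_ivl) simp
  also have "\<dots> = (\<Sum>k\<le>d. of_nat (Suc j) * (c (Suc k) *
        (\<Sum>xs\<in>W k d. coeff p (sum_list xs + Suc (j + k)) * prod_list (map m xs))))"
    by (intro sum.cong) (auto simp: coeff_Id_nu_app d_def add_ac)
  also have "\<dots> = (\<Sum>k\<le>d. of_nat (Suc j) * (c (Suc k) *
        (\<Sum>b\<le>d. coeff p (b + Suc (j + k)) * (Abs_fps m ^ k) $ b)))"
    by (intro sum.cong refl, subst LL[where h = "\<lambda>b. coeff p (b + Suc (j + k))" for k]) (auto simp: hz)
  also have "\<dots> = (\<Sum>k\<le>d. of_nat (Suc j) * (c (Suc k) *
        (\<Sum>q\<le>d. coeff p q * (fps_X ^ Suc (j + k) * Abs_fps m ^ k) $ q)))"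
    by (intro sum.cong refl, subst L1[OF hz]) auto
  also have "\<dots> = of_nat (Suc j) * (\<Sum>q\<le>d. coeff p q *
        (\<Sum>k\<le>d. c (Suc k) * (fps_X ^ (Suc j + k) * Abs_fps m ^ k) $ q))"
    unfolding sum_distrib_left by (subst sum.swap) (simp add: mult_ac)
  also have "\<dots> = of_nat (Suc j) * (\<Sum>q\<le>d. coeff p q *
        (fps_X ^ Suc j * (Abs_fps (\<lambda>k. c (Suc k)) oo (fps_X * Abs_fps m))) $ q)"
  proof -
    have "coeff p q * (\<Sum>k\<le>d. c (Suc k) * (fps_X ^ (Suc j + k) * Abs_fps m ^ k) $ q) =
          coeff p q * (fps_X ^ Suc j * (Abs_fps (\<lambda>k. c (Suc k)) oo (fps_X * Abs_fps m))) $ q"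
      if "q \<in> {..d}" for q using Sg_coeff[of q d j c m] that by simp
    then show ?thesis by (metis (no_types, lifting) sum.cong)
  qed
  finally show ?thesis by (simp add: d_def)
qed

lemma not_bot_Ici: "(a::real) \<le> t \<Longrightarrow> at t within {a..} \<noteq> bot"
proof -
  assume at: "a \<le> t"
  have "t islimpt {a..}"
    unfolding islimpt_approachable
  proof (intro allI impI)
    fix e :: real assume "0 < e"
    then show "\<exists>x'\<in>{a..}. x' \<noteq> t \<and> dist x' t < e"
      using at by (intro bexI[of _ "t + e/2"]) (auto simp: dist_real_def)
  qed
  then show ?thesis using trivial_limit_within by blast
qed

lemma fun_app_le: "degree P \<le> D \<Longrightarrow> fun_app m P = (\<Sum>k\<le>D. coeff P k * m k)"
  unfolding fun_app_def by (rule sum.mono_neutral_left) (auto simp: coeff_eq_0)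

lemma fun_app_add: "fun_app m (P + Q) = fun_app m P + fun_app m Q"
proof -
  define D where "D = max (degree P) (degree Q)"
  have "degree (P + Q) \<le> D" unfolding D_def by (rule degree_add_le) auto
  then show ?thesis using fun_app_le[of P D m] fun_app_le[of Q D m] fun_app_le[of "P + Q" D m]
    by (simp add: D_def sum.distrib algebra_simps)
qed

lemma sumterm_fun_app:
  fixes c :: "nat \<Rightarrow> complex"
  shows "fun_app m (\<Sum>n\<in>{1..Suc (degree p)}. smult (c n / fact (n - 1))
            (Id_nu_app m (n - 1) (dx_first (partial_pow (n - 1) p)))) =
     (\<Sum>q\<le>degree p. coeff p q * (fps_deriv (fps_X * Abs_fps m) *
        (fps_X * (Abs_fps (\<lambda>k. c (Suc k)) oo (fps_X * Abs_fps m)))) $ q)"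
proof -
  define d where "d = degree p"
  define Sg where "Sg = Abs_fps (\<lambda>k. c (Suc k)) oo (fps_X * Abs_fps m)"
  define P where "P = (\<Sum>n\<in>{1..Suc (degree p)}. smult (c n / fact (n - 1))
            (Id_nu_app m (n - 1) (dx_first (partial_pow (n - 1) p))))"
  have cP: "coeff P j = of_nat (Suc j) * (\<Sum>q\<le>d. coeff p q * (fps_X ^ Suc j * Sg) $ q)" for j
    unfolding P_def d_def Sg_def by (rule sumterm_coeff)
  have "degree P \<le> d"
  proof (rule degree_le, intro allI impI)
    fix j assume "d < j"
    then show "coeff P j = 0" unfolding cP by (intro mult_eq_0_iff[THEN iffD2] disjI2 sum.neutral)
       (auto simp: fps_X_power_mult_nth simp del: power_Suc)
  qed
  hence "fun_app m P = (\<Sum>j\<le>d. coeff P j * m j)" by (rule fun_app_le)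
  also have "\<dots> = (\<Sum>q\<le>d. coeff p q * (\<Sum>j\<le>d. of_nat (Suc j) * m j * (fps_X ^ Suc j * Sg) $ q))"
    unfolding cP sum_distrib_left sum_distrib_right by (subst sum.swap) (simp add: mult_ac)
  also have "\<dots> = (\<Sum>q\<le>d. coeff p q * (fps_deriv (fps_X * Abs_fps m) * (fps_X * Sg)) $ q)"
  proof (intro sum.cong refl)
    fix q assume q: "q \<in> {..d}"
    have "(\<Sum>j\<le>d. of_nat (Suc j) * m j * (fps_X ^ Suc j * Sg) $ q) =
          (\<Sum>j=0..q. of_nat (Suc j) * m j * (fps_X ^ Suc j * Sg) $ q)"
      using q by (intro sum.mono_neutral_right) (auto simp: fps_X_power_mult_nth simp del: power_Suc)
    also have "\<dots> = (\<Sum>j=0..q. fps_deriv (fps_X * Abs_fps m) $ j * (fps_X * Sg) $ (q - j))"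
    proof (intro sum.cong refl)
      fix j assume j: "j \<in> {0..q}"
      have "(fps_X ^ Suc j * Sg) $ q = (fps_X * Sg) $ (q - j)"
        by (subst fps_X_power_mult_nth) (use j in auto)
      then show "of_nat (Suc j) * m j * (fps_X ^ Suc j * Sg) $ q =
          fps_deriv (fps_X * Abs_fps m) $ j * (fps_X * Sg) $ (q - j)"
        by (simp only: fps_deriv_nth) (simp add: algebra_simps)
    qed
    also have "\<dots> = (fps_deriv (fps_X * Abs_fps m) * (fps_X * Sg)) $ q"
      by (simp only: fps_mult_nth)
    finally show "coeff p q * (\<Sum>j\<le>d. of_nat (Suc j) * m j * (fps_X ^ Suc j * Sg) $ q) =
        coeff p q * (fps_deriv (fps_X * Abs_fps m) * (fps_X * Sg)) $ q" by simp
  qed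
  finally show ?thesis by (simp add: P_def d_def Sg_def)
qed

lemma boxplus_deriv:
  assumes nu0: "nu 0 = 1" and mu0: "mu 0 = 1"
  shows "((\<lambda>s. boxplus_t nu mu s k) has_vector_derivative Tf nu mu t $ k) (at t within S)"
proof -
  have "HD (Af nu mu) (fps_X * Tf nu mu t) (Suc k) t S" by (rule core_HD[of nu mu, OF nu0 mu0])
  hence "((\<lambda>s. Af nu mu s $ Suc k) has_vector_derivative (fps_X * Tf nu mu t) $ Suc k) (at t within S)"
    unfolding HD_def by blast
  thus ?thesis by (simp add: Af_def)
qed

lemma shift_Cf: "mu 0 = 1 \<Longrightarrow> Abs_fps (\<lambda>k. free_cumulant mu (Suc k)) = fps_shift 1 (Cf mu)"
  by (intro fps_ext) (simp add: fc_Cf)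

lemma sumterm_T:
  assumes nu0: "nu 0 = 1" and mu0: "mu 0 = 1"
  shows "fun_app (boxplus_t nu mu t) (\<Sum>n\<in>{1..Suc (degree p)}. smult (free_cumulant mu n / fact (n - 1))
            (Id_nu_app (boxplus_t nu mu t) (n - 1) (dx_first (partial_pow (n - 1) p)))) =
     (\<Sum>q\<le>degree p. coeff p q * Tf nu mu t $ q)"
  unfolding sumterm_fun_app shift_Cf[of mu, OF mu0] by (simp add: Tf_def Sf_def Af_def)

lemma C1_deriv:
  assumes f: "C1_poly f" and t: "t \<ge> 0"
  shows "((\<lambda>s. coeff (f s) k) has_vector_derivative
           vector_derivative (\<lambda>s. coeff (f s) k) (at t within {0..})) (at t within {0..})"
proof -
  obtain f' where "\<forall>t\<ge>0. ((\<lambda>s. coeff (f s) k) has_vector_derivative f' t) (at t within {0..})"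
    using f unfolding C1_poly_def by blast
  with t have "(\<lambda>s. coeff (f s) k) differentiable (at t within {0..})"
    using differentiableI_vector by blast
  thus ?thesis using vector_derivative_works by blast
qed

lemma coeff_poly_dt:
  assumes f: "C1_poly f" and t: "t \<ge> 0" and N: "\<forall>t\<ge>0. degree (f t) \<le> N"
  shows "coeff (poly_dt f t) = (\<lambda>k. vector_derivative (\<lambda>s. coeff (f s) k) (at t within {0..}))"
    and "\<And>k. k > N \<Longrightarrow> vector_derivative (\<lambda>s. coeff (f s) k) (at t within {0..}) = 0"
proof -
  show z: "vector_derivative (\<lambda>s. coeff (f s) k) (at t within {0..}) = 0" if k: "k > N" for k
  proof -
    have "((\<lambda>s. coeff (f s) k) has_vector_derivative 0) (at t within {0..})"
    proof (rule has_vector_derivative_transform[of t "{0..}" _ "\<lambda>s. 0"])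
      show "\<And>x. x \<in> {0..} \<Longrightarrow> coeff (f x) k = 0"
        using N k by (auto intro!: coeff_eq_0 dest: spec[of _ x for x] order.strict_trans1[rotated])
    qed (use t in auto)
    thus ?thesis by (rule vector_derivative_within[OF not_bot_Ici[OF t]])
  qed
  show "coeff (poly_dt f t) = (\<lambda>k. vector_derivative (\<lambda>s. coeff (f s) k) (at t within {0..}))"
    unfolding poly_dt_def by (rule coeff_Abs_poly) (rule z)
qed

lemma part1:
  assumes nu0: "nu 0 = 1" and mu0: "mu 0 = 1" and f: "C1_poly f" and t: "t \<ge> 0"
  shows "((\<lambda>s. fun_app (boxplus_t nu mu s) (f s)) has_vector_derivative
            fun_app (boxplus_t nu mu t) (D_op mu nu f t)) (at t within {0..})"
proof -
  obtain N where N: "\<forall>t\<ge>0. degree (f t) \<le> N" using f unfolding C1_poly_def by blast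
  define m where "m = boxplus_t nu mu"
  define fd where "fd = (\<lambda>k. vector_derivative (\<lambda>s. coeff (f s) k) (at t within {0..}))"
  define T where "T = Tf nu mu t"
  have fdh: "((\<lambda>s. coeff (f s) k) has_vector_derivative fd k) (at t within {0..})" for k
    unfolding fd_def by (rule C1_deriv[OF f t])
  have mh: "((\<lambda>s. m s k) has_vector_derivative T $ k) (at t within {0..})" for k
    unfolding m_def T_def by (rule boxplus_deriv[of nu mu, OF nu0 mu0])
  have der: "((\<lambda>s. \<Sum>k\<le>N. coeff (f s) k * m s k) has_vector_derivative
             (\<Sum>k\<le>N. coeff (f t) k * T $ k + fd k * m t k)) (at t within {0..})"
    by (intro has_vector_derivative_sum has_vector_derivative_mult fdh mh)
  have der2: "((\<lambda>s. fun_app (m s) (f s)) has_vector_derivative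
             (\<Sum>k\<le>N. coeff (f t) k * T $ k + fd k * m t k)) (at t within {0..})"
    by (rule has_vector_derivative_transform[OF _ _ der]) (use t N in \<open>auto intro!: fun_app_le\<close>)
  have cdt: "coeff (poly_dt f t) = fd" using coeff_poly_dt(1)[OF f t N] by (simp add: fd_def)
  have fdz: "k > N \<Longrightarrow> fd k = 0" for k using coeff_poly_dt(2)[OF f t N] by (simp add: fd_def)
  have "degree (poly_dt f t) \<le> N" by (rule degree_le) (auto simp: cdt fdz)
  hence A: "fun_app (m t) (poly_dt f t) = (\<Sum>k\<le>N. fd k * m t k)"
    by (simp add: fun_app_le cdt)
  have "fun_app (m t) (\<Sum>n\<in>{1..Suc (degree (f t))}. smult (free_cumulant mu n / fact (n - 1))
            (Id_nu_app (m t) (n - 1) (dx_first (partial_pow (n - 1) (f t))))) =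
     (\<Sum>q\<le>degree (f t). coeff (f t) q * T $ q)"
    unfolding m_def T_def by (rule sumterm_T[of nu mu, OF nu0 mu0])
  also have "\<dots> = (\<Sum>q\<le>N. coeff (f t) q * T $ q)"
    using N t by (intro sum.mono_neutral_left) (auto simp: coeff_eq_0)
  finally have B: "fun_app (m t) (\<Sum>n\<in>{1..Suc (degree (f t))}. smult (free_cumulant mu n / fact (n - 1))
            (Id_nu_app (m t) (n - 1) (dx_first (partial_pow (n - 1) (f t))))) = (\<Sum>q\<le>N. coeff (f t) q * T $ q)" .
  have "fun_app (m t) (D_op mu nu f t) = (\<Sum>k\<le>N. coeff (f t) k * T $ k + fd k * m t k)"
    unfolding D_op_def fun_app_add m_def[symmetric] A B by (simp add: sum.distrib)
  with der2 show ?thesis by (simp add: m_def)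
qed

lemma coeff_K_op:
  "coeff (K_op mut s t p) k =
     (\<Sum>n\<le>degree p. coeff p n * (if k \<le> n then (phi_st mut s t ^ (k + 1)) $ (n + 1) else 0))"
  unfolding K_op_def coeff_sum coeff_smult coeff_monom
  by (intro sum.cong refl) (simp add: sum.delta)

lemma fps_inv_X: "fps_inv (fps_X :: 'a::field fps) = fps_X"
proof -
  have "fps_X oo fps_inv (fps_X :: 'a fps) = fps_X" by (rule fps_inv_right) auto
  thus ?thesis by (simp add: fps_X_fps_compose_startby0)
qed

lemma Cf_delta0: "Cf delta0 = 0"
proof -
  have "Abs_fps delta0 = 1" by (intro fps_ext) (simp add: delta0_def)
  hence "G_fps delta0 = fps_X" by (simp add: G_fps_def)
  moreover have "fps_shift 1 (fps_X :: complex fps) = 1" by (intro fps_ext) simp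
  ultimately show ?thesis by (simp add: Cf_def fps_inv_X)
qed

lemma part2:
  assumes mu0: "mu 0 = 1"
    and mt: "\<forall>t\<ge>0. moments (mut t) = boxplus_t delta0 mu t"
    and f: "C1_poly f" and mart: "martingale_poly mut f" and s0: "s0 \<ge> 0"
  shows "D_op mu delta0 f s0 = 0"
proof (rule poly_eqI)
  fix k
  have d0: "delta0 0 = 1" by (simp add: delta0_def)
  obtain N where N: "\<forall>t\<ge>0. degree (f t) \<le> N" using f unfolding C1_poly_def by blast
  define p where "p = f s0"
  define g where "g = Af delta0 mu s0"
  define u where "u = fps_inv g"
  define T where "T = Tf delta0 mu s0"
  define Sg where "Sg = Sf delta0 mu s0"
  define fd where "fd = (\<lambda>k. vector_derivative (\<lambda>s. coeff (f s) k) (at s0 within {0..}))"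
  define psi where "psi = (\<lambda>t. u ^ (k + 1) oo Af delta0 mu t)"
  define h where "h = (\<lambda>t. \<Sum>n\<le>N. coeff (f t) n * psi t $ (n + 1))"
  have A0: "Af delta0 mu t $ 0 = 0" for t by (simp add: Af_def)
  have g0: "g $ 0 = 0" by (simp add: g_def Af_def)
  have g1: "g $ 1 = 1" using boxplus_char[of delta0 mu s0, OF d0 mu0] by (simp add: g_def Af_def)
  have ug: "u oo g = fps_X" unfolding u_def by (rule fps_inv[OF g0]) (use g1 in simp)
  have psi0: "psi s0 = fps_X ^ (k + 1)"
    unfolding psi_def g_def[symmetric] using fps_compose_power[OF g0, of u "k+1"] ug by simp
  have fdz: "n > N \<Longrightarrow> fd n = 0" for n using coeff_poly_dt(2)[OF f s0 N] by (simp add: fd_def)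
  have pz: "n > N \<Longrightarrow> coeff p n = 0" for n using N s0 by (auto simp: p_def intro!: coeff_eq_0)
  have hc: "h t = coeff p k" if t: "t \<in> {s0..}" for t
  proof (cases "t = s0")
    case True
    have "h t = (\<Sum>n\<le>N. coeff p n * (if n = k then 1 else 0))"
      unfolding h_def True psi0 p_def by (intro sum.cong refl) simp
    also have "\<dots> = coeff p k" using pz by (simp add: sum.delta' if_distrib cong: if_cong) 
    finally show ?thesis .
  next
    case False
    with t have st: "s0 < t" by simp
    have t0: "t \<ge> 0" using st s0 by simp
    have phi: "phi_st mut s0 t = u oo Af delta0 mu t"
      using mt s0 t0 by (simp add: phi_st_def u_def g_def Af_def G_fps_def)
    have phik: "phi_st mut s0 t ^ (k + 1) = psi t"
      unfolding phi psi_def by (rule fps_compose_power[OF A0])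
    have "coeff p k = coeff (K_op mut s0 t (f t)) k"
      using mart st s0 by (simp add: martingale_poly_def p_def)
    also have "\<dots> = (\<Sum>n\<le>degree (f t). coeff (f t) n * psi t $ (n + 1))"
      unfolding coeff_K_op phik
    proof (intro sum.cong refl)
      fix n
      have "psi t $ (n + 1) = 0" if "\<not> k \<le> n"
      proof -
        have "(psi t) = (u oo Af delta0 mu t) ^ (k+1)" using phik phi by simp
        moreover have "(u oo Af delta0 mu t) $ 0 = 0" by (simp add: u_def)
        ultimately show ?thesis using that pow_nth_zero[of "u oo Af delta0 mu t" "n+1" "k+1"] by simp
      qed
      then show "coeff (f t) n * (if k \<le> n then psi t $ (n + 1) else 0) = coeff (f t) n * psi t $ (n + 1)"
        by auto
    qed
    also have "\<dots> = h t"
      unfolding h_def using N t0 by (intro sum.mono_neutral_left) (auto simp: coeff_eq_0)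
    finally show ?thesis by simp
  qed
  have hd0: "(h has_vector_derivative 0) (at s0 within {s0..})"
    by (rule has_vector_derivative_transform[of s0 _ _ "\<lambda>_. coeff p k"]) (use hc in auto)
  have HDpsi: "HD psi ((fps_deriv (u ^ (k + 1)) oo g) * (fps_X * T)) (Suc N) s0 {s0..}"
    unfolding psi_def g_def T_def
    by (rule HD_compose[OF core_HD[of delta0 mu, OF d0 mu0] A0]) simp
  have gT: "(fps_deriv u oo g) * fps_deriv g = 1"
    using fps_compose_deriv[OF g0, of u] ug by simp
  have Tg: "T = fps_deriv g * (fps_X * Sg)" by (simp add: T_def Tf_def Sg_def g_def)
  have psid: "(fps_deriv (u ^ (k + 1)) oo g) * (fps_X * T) = fps_const (of_nat (k + 1)) * fps_X ^ (k + 2) * Sg"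
  proof -
    have "fps_deriv (u ^ (k + 1)) oo g = fps_const (of_nat (k + 1)) * (fps_deriv u oo g) * (u oo g) ^ k"
    proof -
      have "fps_deriv (u ^ (k + 1)) = fps_const (of_nat (k + 1)) * fps_deriv u * u ^ k"
        using fps_deriv_power[of u "k+1"] by simp
      thus ?thesis by (simp only: fps_compose_mult_distrib[OF g0] fps_compose_power[OF g0] fps_const_compose)
    qed
    also have "\<dots> = fps_const (of_nat (k + 1)) * (fps_deriv u oo g) * fps_X ^ k" by (simp add: ug)
    finally have e: "fps_deriv (u ^ (k + 1)) oo g = fps_const (of_nat (k + 1)) * (fps_deriv u oo g) * fps_X ^ k" .
    have "fps_const (of_nat (k + 1)) * (fps_deriv u oo g) * fps_X ^ k * (fps_X * (fps_deriv g * (fps_X * Sg)))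
        = fps_const (of_nat (k + 1)) * ((fps_deriv u oo g) * fps_deriv g) * fps_X ^ (k + 2) * Sg"
      by (simp add: algebra_simps power_add power2_eq_square)
    also have "\<dots> = fps_const (of_nat (k + 1)) * fps_X ^ (k + 2) * Sg" by (simp add: gT)
    finally show ?thesis unfolding e Tg .
  qed
  have psin: "((\<lambda>t. psi t $ (n + 1)) has_vector_derivative
       of_nat (Suc k) * (fps_X ^ Suc k * Sg) $ n) (at s0 within {s0..})" if "n \<le> N" for n
  proof -
    have "((\<lambda>t. psi t $ (n + 1)) has_vector_derivative
         (fps_const (of_nat (k + 1)) * fps_X ^ (k + 2) * Sg) $ (n + 1)) (at s0 within {s0..})"
      using HDpsi that unfolding HD_def psid by simp
    moreover have "(fps_const (of_nat (k + 1)) * fps_X ^ (k + 2) * Sg) $ (n + 1) =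
        of_nat (Suc k) * (fps_X ^ Suc k * Sg) $ n"
      by (simp only: mult.assoc fps_mult_left_const_nth fps_X_power_mult_nth) auto
    ultimately show ?thesis by simp
  qed
  have fdh: "((\<lambda>s. coeff (f s) n) has_vector_derivative fd n) (at s0 within {s0..})" for n
    unfolding fd_def by (rule has_vector_derivative_within_subset[OF C1_deriv[OF f s0]]) (use s0 in auto)
  have hd: "(h has_vector_derivative
      (\<Sum>n\<le>N. coeff (f s0) n * (of_nat (Suc k) * (fps_X ^ Suc k * Sg) $ n) + fd n * psi s0 $ (n + 1)))
      (at s0 within {s0..})"
    unfolding h_def by (intro has_vector_derivative_sum has_vector_derivative_mult fdh psin) auto
  have zero: "(\<Sum>n\<le>N. coeff p n * (of_nat (Suc k) * (fps_X ^ Suc k * Sg) $ n) + fd n * psi s0 $ (n + 1)) = 0"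
    using vector_derivative_unique_within[OF not_bot_Ici[of s0 s0] hd hd0] by (simp add: p_def)
  have "(\<Sum>n\<le>N. fd n * psi s0 $ (n + 1)) = fd k"
  proof -
    have "(\<Sum>n\<le>N. fd n * psi s0 $ (n + 1)) = (\<Sum>n\<le>N. if n = k then fd n else 0)"
      unfolding psi0 by (intro sum.cong refl) simp
    also have "\<dots> = fd k" using fdz by (subst sum.delta) auto
    finally show ?thesis .
  qed
  with zero have Z: "of_nat (Suc k) * (\<Sum>n\<le>N. coeff p n * (fps_X ^ Suc k * Sg) $ n) + fd k = 0"
    by (simp add: sum.distrib sum_distrib_left mult_ac)
  have "coeff (D_op mu delta0 f s0) k =
      of_nat (Suc k) * (\<Sum>q\<le>degree p. coeff p q * (fps_X ^ Suc k * Sg) $ q) + fd k"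
    unfolding D_op_def coeff_add sumterm_coeff coeff_poly_dt(1)[OF f s0 N]
    by (simp add: shift_Cf[of mu, OF mu0] Sg_def Sf_def Af_def p_def fd_def)
  also have "(\<Sum>q\<le>degree p. coeff p q * (fps_X ^ Suc k * Sg) $ q) = (\<Sum>q\<le>N. coeff p q * (fps_X ^ Suc k * Sg) $ q)"
    using N s0 by (intro sum.mono_neutral_left) (auto simp: p_def coeff_eq_0)
  finally show "coeff (D_op mu delta0 f s0) k = coeff 0 k" using Z by simp
qed

lemma moments_0: "prob_space M \<Longrightarrow> moments M 0 = 1"
  by (simp add: moments_def prob_space.prob_space)

lemma mt_eq:
  assumes mu0: "mu 0 = 1" and M0: "M 0 = 1"
    and fc: "\<forall>n\<ge>1. free_cumulant M n = complex_of_real t * free_cumulant mu n"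
  shows "M = boxplus_t delta0 mu t"
proof -
  have d0: "delta0 0 = 1" by (simp add: delta0_def)
  have b: "boxplus_t delta0 mu t 0 = 1 \<and> Cf (boxplus_t delta0 mu t) = fps_const (of_real t) * Cf mu"
    using boxplus_char[of delta0 mu t, OF d0 mu0] by (simp add: Cf_delta0)
  have "Cf M = fps_const (of_real t) * Cf mu"
  proof (intro fps_ext)
    fix n show "Cf M $ n = (fps_const (of_real t) * Cf mu) $ n"
    proof (cases "n = 0")
      case True thus ?thesis using M0 mu0 by (simp add: Cf_0)
    next
      case False thus ?thesis using fc fc_Cf[of M n, OF M0] fc_Cf[of mu n, OF mu0] by simp
    qed
  qed
  thus ?thesis using Cf_unique[of M "boxplus_t delta0 mu t"] b M0 by simp
qed

theorem lemma4p3: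
  fixes \<mu> :: "real measure" and \<mu>t :: "real \<Rightarrow> real measure" and \<nu> :: "nat \<Rightarrow> complex"
  assumes "prob_space \<mu>" and "sets \<mu> = sets borel"
    and "\<forall>n. integrable \<mu> (\<lambda>x. x ^ n)"
    and "\<forall>t\<ge>0. prob_space (\<mu>t t) \<and> sets (\<mu>t t) = sets borel \<and> (\<forall>n. integrable (\<mu>t t) (\<lambda>x. x ^ n))"
    and "\<mu>t 1 = \<mu>"
    and "\<forall>t\<ge>0. \<forall>n\<ge>1. free_cumulant (moments (\<mu>t t)) n = complex_of_real t * free_cumulant (moments \<mu>) n"
    and "\<nu> 0 = 1"
  shows "(\<forall>f. C1_poly f \<longrightarrow> (\<forall>t\<ge>0.
            ((\<lambda>s. fun_app (boxplus_t \<nu> (moments \<mu>) s) (f s)) has_vector_derivative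
               fun_app (boxplus_t \<nu> (moments \<mu>) t) (D_op (moments \<mu>) \<nu> f t)) (at t within {0..})))
       \<and> (\<forall>f. C1_poly f \<and> martingale_poly \<mu>t f \<longrightarrow> (\<forall>t\<ge>0. D_op (moments \<mu>) delta0 f t = 0))"
proof
  have mu0: "moments \<mu> 0 = 1" using assms(1) by (rule moments_0)
  show "\<forall>f. C1_poly f \<longrightarrow> (\<forall>t\<ge>0.
            ((\<lambda>s. fun_app (boxplus_t \<nu> (moments \<mu>) s) (f s)) has_vector_derivative
               fun_app (boxplus_t \<nu> (moments \<mu>) t) (D_op (moments \<mu>) \<nu> f t)) (at t within {0..}))"
    using part1[of \<nu> "moments \<mu>", OF assms(7) mu0] by blast
  have mt: "\<forall>t\<ge>0. moments (\<mu>t t) = boxplus_t delta0 (moments \<mu>) t"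
  proof (intro allI impI)
    fix t :: real assume t: "t \<ge> 0"
    show "moments (\<mu>t t) = boxplus_t delta0 (moments \<mu>) t"
      by (rule mt_eq[of "moments \<mu>" "moments (\<mu>t t)" t, OF mu0]) (use assms(4,6) t moments_0 in auto)
  qed
  show "\<forall>f. C1_poly f \<and> martingale_poly \<mu>t f \<longrightarrow> (\<forall>t\<ge>0. D_op (moments \<mu>) delta0 f t = 0)"
    using part2[of "moments \<mu>" \<mu>t, OF mu0 mt] by blast
qed

end
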